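(* For every $t>0$ and every $u_0\in\exp L^2(\mathbb{R}^N)$, the function $(e^{-t\Delta^2}u_0)^{\sharp\sharp}$ belongs to $L^\infty(0,\infty)$.
   Context: $e^{-t\Delta^2}$ denotes the biharmonic heat semigroup on $\mathbb{R}^N$: $e^{-t\Delta^2}\varphi=E_t\star\varphi$ with $E_t(x)=(2\pi)^{-N}\int_{\mathbb{R}^N}e^{-t|\xi|^4}e^{ix\cdot\xi}\,d\xi$. The Orlicz space $\exp L^2(\mathbb{R}^N)$ is the set of $u\in L^1_{loc}(\mathbb{R}^N)$ such that $\int_{\mathbb{R}^N}(e^{|u(x)|^2/\alpha^2}-1)\,dx<\infty$ for some $\alpha>0$. For a measurable a.e. finite $u$ on $\mathbb{R}^N$, $\mu_u(\tau)=|\{x:|u(x)|>\tau\}|$, the decreasing rearrangement is $u^\sharp(r)=\inf\{\tau>0:\mu_u(\tau)\leq r\}$ for $r\geq0$, and $u^{\sharp\sharp}(r)=\frac1r\int_0^r u^\sharp(\eta)\,d\eta$ for $r>0$. *)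

theory Defs
  imports "HOL-Analysis.Analysis"
begin

definition biharm_kernel :: "real \<Rightarrow> 'a::euclidean_space \<Rightarrow> complex" where
  "biharm_kernel t x =
     complex_of_real (1 / (2 * pi) ^ DIM('a)) *
     (\<integral>\<xi>. complex_of_real (exp (- t * norm \<xi> ^ 4)) * cis (x \<bullet> \<xi>) \<partial>lborel)"

definition biharm_heat :: "real \<Rightarrow> ('a::euclidean_space \<Rightarrow> real) \<Rightarrow> 'a \<Rightarrow> complex" where
  "biharm_heat t \<phi> x = (\<integral>y. biharm_kernel t (x - y) * complex_of_real (\<phi> y) \<partial>lebesgue)"

definition loc_integrable :: "('a::euclidean_space \<Rightarrow> real) \<Rightarrow> bool" where
  "loc_integrable u \<longleftrightarrow> u \<in> borel_measurable lebesgue \<and>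
     (\<forall>K. compact K \<longrightarrow> set_integrable lebesgue K u)"

definition expL2 :: "('a::euclidean_space \<Rightarrow> real) set" where
  "expL2 = {u. loc_integrable u \<and>
     (\<exists>\<alpha>>0. (\<integral>\<^sup>+x. ennreal (exp ((u x)\<^sup>2 / \<alpha>\<^sup>2) - 1) \<partial>lebesgue) < \<infinity>)}"

definition distrib_fun :: "('a::euclidean_space \<Rightarrow> 'b::real_normed_vector) \<Rightarrow> real \<Rightarrow> ennreal" where
  "distrib_fun u \<tau> = emeasure lebesgue {x. norm (u x) > \<tau>}"

text \<open>Decreasing rearrangement u^sharp(r) = inf {tau > 0. mu_u(tau) \<le> r}
  (value in [0,\<infinity>], the infimum of the empty set being \<infinity>).\<close>
definition rearr :: "('a::euclidean_space \<Rightarrow> 'b::real_normed_vector) \<Rightarrow> real \<Rightarrow> ennreal" where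
  "rearr u r = (INF \<tau>\<in>{\<tau>::real. \<tau> > 0 \<and> distrib_fun u \<tau> \<le> ennreal r}. ennreal \<tau>)"

definition rearr2 :: "('a::euclidean_space \<Rightarrow> 'b::real_normed_vector) \<Rightarrow> real \<Rightarrow> ennreal" where
  "rearr2 u r = (\<integral>\<^sup>+\<eta>\<in>{0..r}. rearr u \<eta> \<partial>lborel) / ennreal r"

definition Linfty_pos :: "(real \<Rightarrow> ennreal) \<Rightarrow> bool" where
  "Linfty_pos f \<longleftrightarrow> f \<in> borel_measurable (restrict_space lborel {0<..}) \<and>
     (\<exists>C::real. AE r in lborel. r > 0 \<longrightarrow> f r \<le> ennreal C)"

end

theory Submission imports Defs "HOL-Probability.Characteristic_Functions" begin

lemma integral_lborel_prod:
  fixes h :: "'a::euclidean_space \<Rightarrow> real \<Rightarrow> complex"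
  assumes int: "\<And>b. b \<in> Basis \<Longrightarrow> integrable lborel (h b)"
  shows "(\<integral>x. (\<Prod>b\<in>Basis. h b (x \<bullet> b)) \<partial>lborel) = (\<Prod>b\<in>Basis. (\<integral>x. h b x \<partial>lborel))"
proof -
  interpret P: product_sigma_finite "\<lambda>_::'a. lborel::real measure" proof qed
  have meas[measurable]: "\<And>b. b \<in> Basis \<Longrightarrow> h b \<in> borel_measurable borel"
    using int by (simp add: borel_measurable_integrable)
  have T: "(\<lambda>f. \<Sum>b\<in>Basis. f b *\<^sub>R b) \<in> measurable (\<Pi>\<^sub>M b\<in>Basis. (lborel::real measure)) (borel::'a measure)"
    by measurable
  have "(\<integral>x. (\<Prod>b\<in>Basis. h b (x \<bullet> b)) \<partial>lborel) =
     (\<integral>y. (\<Prod>b\<in>Basis. h b ((\<Sum>c\<in>Basis. y c *\<^sub>R c) \<bullet> b)) \<partial>(\<Pi>\<^sub>M b\<in>Basis. lborel))"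
    apply (subst lborel_eq)
    apply (subst integral_distr[OF T])
    apply measurable
    done
  also have "\<dots> = (\<integral>y. (\<Prod>b\<in>Basis. h b (y b)) \<partial>(\<Pi>\<^sub>M b\<in>Basis. lborel))"
    apply (rule Bochner_Integration.integral_cong[OF refl])
    apply (rule prod.cong[OF refl])
    apply (simp add: inner_sum_left inner_Basis if_distrib sum.delta cong: if_cong)
    done
  also have "\<dots> = (\<Prod>b\<in>Basis. (\<integral>x. h b x \<partial>lborel))"
    by (rule P.product_integral_prod) (auto intro: int)
  finally show ?thesis .
qed


lemma cis_sum: "finite A \<Longrightarrow> cis (\<Sum>i\<in>A. f i) = (\<Prod>i\<in>A. cis (f i))"
  by (induction A rule: finite_induct) (auto simp: cis_mult[symmetric])

lemma integrable_gauss1: "a > 0 \<Longrightarrow> integrable lborel (\<lambda>y::real. exp (- y\<^sup>2 / (2 * a\<^sup>2)))"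
proof -
  assume a: "a > 0"
  have "integrable lborel (\<lambda>y. sqrt (2 * pi * a\<^sup>2) * normal_density 0 a y)"
    using integrable_normal_density[of a 0, OF a] by (rule integrable_mult_right)
  moreover have "\<And>y. sqrt (2 * pi * a\<^sup>2) * normal_density 0 a y = exp (- y\<^sup>2 / (2 * a\<^sup>2))"
  proof -
    fix y :: real
    have "sqrt (2 * pi * a\<^sup>2) > 0" using a by simp
    then show "sqrt (2 * pi * a\<^sup>2) * normal_density 0 a y = exp (- y\<^sup>2 / (2 * a\<^sup>2))"
      using a by (simp add: normal_density_def)
  qed
  ultimately show ?thesis by simp
qed

lemma gauss_ft_1d:
  fixes a s :: real assumes a: "a > 0"
  shows "(\<integral>y. complex_of_real (exp (- y\<^sup>2 / (2 * a\<^sup>2))) * cis (y * s) \<partial>lborel)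
        = complex_of_real (a * sqrt (2 * pi) * exp (- (a * s)\<^sup>2 / 2))"
proof -
  have "char std_normal_distribution (a * s) = complex_of_real (exp (- (a * s)\<^sup>2 / 2))"
    by (simp add: char_std_normal_distribution)
  moreover have "char std_normal_distribution (a * s) =
      (\<integral>x. std_normal_density x *\<^sub>R iexp (a * s * x) \<partial>lborel)"
    unfolding char_def by (subst integral_density) auto
  moreover have "(\<integral>x. std_normal_density x *\<^sub>R iexp (a * s * x) \<partial>lborel)
      = complex_of_real (1 / sqrt (2 * pi)) * (\<integral>x. complex_of_real (exp (- x\<^sup>2 / 2)) * cis ((a * x) * s) \<partial>lborel)"
    by (simp add: std_normal_density_def cis_conv_exp scaleR_conv_of_real mult.assoc mult.commute mult.left_commute)
  moreover have "(\<integral>y. complex_of_real (exp (- y\<^sup>2 / (2 * a\<^sup>2))) * cis (y * s) \<partial>lborel)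
      = \<bar>a\<bar> *\<^sub>R (\<integral>x. complex_of_real (exp (- (0 + a * x)\<^sup>2 / (2 * a\<^sup>2))) * cis ((0 + a * x) * s) \<partial>lborel)"
    using a by (intro lborel_integral_real_affine) auto
  moreover have "\<And>x. (a * x)\<^sup>2 / (2 * a\<^sup>2) = x\<^sup>2 / 2" using a by (simp add: power_mult_distrib)
  ultimately show ?thesis using a
    by (simp add: scaleR_conv_of_real field_simps)
qed

lemma norm_sq_Basis: "(norm (x::'a::euclidean_space))\<^sup>2 = (\<Sum>b\<in>Basis. (x \<bullet> b)\<^sup>2)"
  unfolding power2_norm_eq_inner by (subst euclidean_inner) (simp add: power2_eq_square)

definition gw :: "real \<Rightarrow> 'a::euclidean_space \<Rightarrow> real" where
  "gw a x = exp (- (norm x)\<^sup>2 / (2 * a\<^sup>2))"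

lemma gauss_ft:
  fixes \<zeta> :: "'a::euclidean_space" assumes a: "a > 0"
  shows "(\<integral>x. complex_of_real (gw a x) * cis (x \<bullet> \<zeta>) \<partial>lborel)
     = complex_of_real (\<Prod>b\<in>Basis. a * sqrt (2 * pi) * exp (- (a * (\<zeta> \<bullet> b))\<^sup>2 / 2))"
proof -
  have eq: "complex_of_real (gw a x) * cis (x \<bullet> \<zeta>) =
     (\<Prod>b\<in>Basis. complex_of_real (exp (- (x \<bullet> b)\<^sup>2 / (2 * a\<^sup>2))) * cis ((x \<bullet> b) * (\<zeta> \<bullet> b)))" for x
  proof -
    have n1: "- (norm x)\<^sup>2 / (2 * a\<^sup>2) = (\<Sum>b\<in>Basis. - (x \<bullet> b)\<^sup>2 / (2 * a\<^sup>2))"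
      by (simp add: norm_sq_Basis sum_divide_distrib sum_negf)
    have xz: "x \<bullet> \<zeta> = (\<Sum>b\<in>Basis. (x \<bullet> b) * (\<zeta> \<bullet> b))" by (rule euclidean_inner)
    have "complex_of_real (gw a x) * cis (x \<bullet> \<zeta>) =
       complex_of_real (exp (\<Sum>b\<in>Basis. - (x \<bullet> b)\<^sup>2 / (2 * a\<^sup>2))) * cis (\<Sum>b\<in>Basis. (x \<bullet> b) * (\<zeta> \<bullet> b))"
      unfolding gw_def by (simp only: n1 xz)
    also have "\<dots> = (\<Prod>b\<in>Basis. complex_of_real (exp (- (x \<bullet> b)\<^sup>2 / (2 * a\<^sup>2)))) * (\<Prod>b\<in>Basis. cis ((x \<bullet> b) * (\<zeta> \<bullet> b)))"
      by (simp only: exp_sum[OF finite_Basis] cis_sum[OF finite_Basis] of_real_prod)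
    also have "\<dots> = (\<Prod>b\<in>Basis. complex_of_real (exp (- (x \<bullet> b)\<^sup>2 / (2 * a\<^sup>2))) * cis ((x \<bullet> b) * (\<zeta> \<bullet> b)))"
      by (rule prod.distrib[symmetric])
    finally show ?thesis .
  qed
  have int: "integrable lborel (\<lambda>y. complex_of_real (exp (- y\<^sup>2 / (2 * a\<^sup>2))) * cis (y * s))" for s
  proof (rule Bochner_Integration.integrable_bound)
    show "integrable lborel (\<lambda>y. exp (- y\<^sup>2 / (2 * a\<^sup>2)))" using integrable_gauss1[OF a] .
    show "(\<lambda>y. complex_of_real (exp (- y\<^sup>2 / (2 * a\<^sup>2))) * cis (y * s)) \<in> borel_measurable lborel"
      unfolding measurable_lborel2 using a by (intro borel_measurable_continuous_onI continuous_intros) auto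
    show "AE y in lborel. norm (complex_of_real (exp (- y\<^sup>2 / (2 * a\<^sup>2))) * cis (y * s)) \<le> norm (exp (- y\<^sup>2 / (2 * a\<^sup>2)))"
      by (simp add: norm_mult)
  qed
  have "(\<integral>x. complex_of_real (gw a x) * cis (x \<bullet> \<zeta>) \<partial>lborel) =
     (\<integral>x. (\<Prod>b\<in>Basis. complex_of_real (exp (- (x \<bullet> b)\<^sup>2 / (2 * a\<^sup>2))) * cis ((x \<bullet> b) * (\<zeta> \<bullet> b))) \<partial>lborel)"
    by (rule Bochner_Integration.integral_cong[OF refl eq])
  also have "\<dots> = (\<Prod>b\<in>Basis. (\<integral>y. complex_of_real (exp (- y\<^sup>2 / (2 * a\<^sup>2))) * cis (y * (\<zeta> \<bullet> b)) \<partial>lborel))"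
    by (rule integral_lborel_prod[where h="\<lambda>b y. complex_of_real (exp (- y\<^sup>2 / (2 * a\<^sup>2))) * cis (y * (\<zeta> \<bullet> b))"]) (rule int)
  also have "\<dots> = (\<Prod>b\<in>Basis. complex_of_real (a * sqrt (2 * pi) * exp (- (a * (\<zeta> \<bullet> b))\<^sup>2 / 2)))"
    by (rule prod.cong[OF refl], rule gauss_ft_1d[OF a])
  finally show ?thesis by (simp only: of_real_prod)
qed


lemma gw_pos: "gw a x > 0" by (simp add: gw_def)

lemma nn_integral_gw: assumes a: "a > 0"
  shows "(\<integral>\<^sup>+x. ennreal (gw a (x::'a::euclidean_space)) \<partial>lborel) < \<infinity>"
proof -
  have "(\<integral>\<^sup>+x. ennreal (gw a (x::'a)) \<partial>lborel) =
     (\<integral>\<^sup>+x. (\<Prod>b\<in>Basis. ennreal (exp (- ((x::'a) \<bullet> b)\<^sup>2 / (2 * a\<^sup>2)))) \<partial>lborel)"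
  proof -
    have pw: "ennreal (gw a x) = (\<Prod>b\<in>Basis. ennreal (exp (- (x \<bullet> b)\<^sup>2 / (2 * a\<^sup>2))))" for x :: 'a
    proof -
      have "- (norm x)\<^sup>2 / (2 * a\<^sup>2) = (\<Sum>b\<in>Basis. - (x \<bullet> b)\<^sup>2 / (2 * a\<^sup>2))"
        by (simp add: norm_sq_Basis sum_divide_distrib sum_negf)
      then show ?thesis
        by (simp add: gw_def exp_sum prod_ennreal)
    qed
    show ?thesis by (simp only: pw)
  qed
  also have "\<dots> = (\<Prod>b\<in>(Basis::'a set). (\<integral>\<^sup>+y. ennreal (exp (- y\<^sup>2 / (2 * a\<^sup>2))) \<partial>lborel))"
    by (rule nn_integral_lborel_prod[where f="\<lambda>b y. ennreal (exp (- y\<^sup>2 / (2 * a\<^sup>2)))"]) auto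
  also have "\<dots> < \<infinity>"
  proof -
    have "(\<integral>\<^sup>+y. ennreal (exp (- y\<^sup>2 / (2 * a\<^sup>2))) \<partial>lborel) < \<infinity>"
      using integrable_gauss1[OF a] by (simp add: integrable_iff_bounded)
    then show ?thesis by (simp add: less_top[symmetric] ennreal_prod_eq_top power_eq_top_ennreal)
  qed
  finally show ?thesis .
qed

lemma integrable_gw: "a > 0 \<Longrightarrow> integrable lborel (gw a :: 'a::euclidean_space \<Rightarrow> real)"
  apply (rule integrableI_bounded)
  apply (simp add: gw_def measurable_lborel2 borel_measurable_continuous_onI continuous_intros)
  using nn_integral_gw[of a] by (simp add: abs_of_pos gw_pos)

definition gk :: "real \<Rightarrow> 'a::euclidean_space \<Rightarrow> real" where
  "gk t \<xi> = exp (- t * norm \<xi> ^ 4)"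

lemma gk_le: assumes t: "t > 0" shows "gk t \<xi> \<le> exp (1 / (4 * t)) * gw (sqrt (1/2)) \<xi>"
proof -
  have "- t * norm \<xi> ^ 4 \<le> 1 / (4 * t) + - (norm \<xi>)\<^sup>2"
  proof -
    have "0 \<le> (2 * t * (norm \<xi>)\<^sup>2 - 1)\<^sup>2 / (4 * t)" using t by simp
    also have "(2 * t * (norm \<xi>)\<^sup>2 - 1)\<^sup>2 / (4 * t) = t * norm \<xi> ^ 4 - (norm \<xi>)\<^sup>2 + 1 / (4 * t)"
      using t by (simp add: field_simps power2_eq_square) (simp add: algebra_simps power4_eq_xxxx)
    finally show ?thesis by simp
  qed
  then have "exp (- t * norm \<xi> ^ 4) \<le> exp (1 / (4 * t) + - (norm \<xi>)\<^sup>2)" by simp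
  also have "\<dots> = exp (1 / (4 * t)) * exp (- (norm \<xi>)\<^sup>2)" by (rule exp_add)
  also have "exp (- (norm \<xi>)\<^sup>2) = gw (sqrt (1/2)) \<xi>" by (simp add: gw_def)
  finally show ?thesis by (simp add: gk_def)
qed

lemma gk_pos: "gk t \<xi> > 0" by (simp add: gk_def)

lemma gk_meas[measurable]: "gk t \<in> borel_measurable borel"
  unfolding gk_def by (intro borel_measurable_continuous_onI continuous_intros)

lemma integrable_gk: assumes t: "t > 0" shows "integrable lborel (gk t :: 'a::euclidean_space \<Rightarrow> real)"
proof (rule Bochner_Integration.integrable_bound)
  show "integrable lborel (\<lambda>\<xi>::'a. exp (1 / (4 * t)) * gw (sqrt (1/2)) \<xi>)"
    by (intro integrable_mult_right integrable_gw) simp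
  show "gk t \<in> borel_measurable lborel" by simp
  show "AE x in lborel. norm (gk t x) \<le> norm (exp (1 / (4 * t)) * gw (sqrt (1/2)) (x::'a))"
    by (intro AE_I2) (simp add: abs_of_pos gk_pos gw_pos gk_le[OF t])
qed


definition FF :: "real \<Rightarrow> 'a::euclidean_space \<Rightarrow> complex" where
  "FF t x = (\<integral>\<xi>. complex_of_real (gk t \<xi>) * cis (x \<bullet> \<xi>) \<partial>lborel)"

lemma meas_pair_lborel:
  fixes f :: "'a::euclidean_space \<times> 'b::euclidean_space \<Rightarrow> 'c::topological_space"
  assumes "f \<in> borel_measurable borel"
  shows "f \<in> borel_measurable (lborel \<Otimes>\<^sub>M lborel)" "f \<in> borel_measurable (borel \<Otimes>\<^sub>M lborel)"
    "f \<in> borel_measurable (lborel \<Otimes>\<^sub>M borel)"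
proof -
  have e1: "sets (lborel \<Otimes>\<^sub>M lborel) = sets (borel::('a\<times>'b) measure)"
    by (subst borel_prod[symmetric]) (rule sets_pair_measure_cong; simp)
  have e2: "sets (borel \<Otimes>\<^sub>M lborel) = sets (borel::('a\<times>'b) measure)"
    by (subst borel_prod[symmetric]) (rule sets_pair_measure_cong; simp)
  have e3: "sets (lborel \<Otimes>\<^sub>M borel) = sets (borel::('a\<times>'b) measure)"
    by (subst borel_prod[symmetric]) (rule sets_pair_measure_cong; simp)
  show "f \<in> borel_measurable (lborel \<Otimes>\<^sub>M lborel)" using assms by (simp only: measurable_cong_sets[OF e1 refl])
  show "f \<in> borel_measurable (borel \<Otimes>\<^sub>M lborel)" using assms by (simp only: measurable_cong_sets[OF e2 refl])
  show "f \<in> borel_measurable (lborel \<Otimes>\<^sub>M borel)" using assms by (simp only: measurable_cong_sets[OF e3 refl])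
qed

lemma FF_meas[measurable]: "FF t \<in> borel_measurable borel"
  unfolding FF_def
  apply (rule lborel.borel_measurable_lebesgue_integral)
  apply (rule meas_pair_lborel)
  apply (rule borel_measurable_continuous_onI)
  apply (simp add: split_beta' gk_def)
  apply (intro continuous_intros)
  done

lemma FF_bound: fixes x :: "'a::euclidean_space" shows "cmod (FF t x) \<le> (\<integral>\<xi>. gk t (\<xi>::'a) \<partial>lborel)"
proof -
  have "cmod (FF t x) \<le> (\<integral>\<xi>. norm (complex_of_real (gk t \<xi>) * cis (x \<bullet> \<xi>)) \<partial>lborel)"
    unfolding FF_def by (rule integral_norm_bound)
  also have "\<dots> = (\<integral>\<xi>. gk t (\<xi>::'a) \<partial>lborel)"
    by (simp add: norm_mult abs_of_pos gk_pos)
  finally show ?thesis .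
qed

lemma integrable_pair_bound:
  fixes f :: "'a::euclidean_space \<times> 'b::euclidean_space \<Rightarrow> complex"
    and u :: "'a \<Rightarrow> real" and v :: "'b \<Rightarrow> real"
  assumes f: "f \<in> borel_measurable (lborel \<Otimes>\<^sub>M lborel)"
    and u: "integrable lborel u" and v: "integrable lborel v"
    and bd: "\<And>x y. norm (f (x, y)) \<le> u x * v y"
  shows "integrable (lborel \<Otimes>\<^sub>M lborel) f"
proof (rule Bochner_Integration.integrable_bound[OF _ f])
  have um[measurable]: "u \<in> borel_measurable lborel" using u by (rule borel_measurable_integrable)
  have vm[measurable]: "v \<in> borel_measurable lborel" using v by (rule borel_measurable_integrable)
  show "integrable (lborel \<Otimes>\<^sub>M lborel) (\<lambda>p. u (fst p) * v (snd p))"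
  proof (rule lborel_pair.Fubini_integrable)
    show "(\<lambda>p. u (fst p) * v (snd p)) \<in> borel_measurable (lborel \<Otimes>\<^sub>M lborel)" by measurable
    have "integrable lborel (\<lambda>x. \<bar>u x\<bar> * (\<integral>y. \<bar>v y\<bar> \<partial>lborel))"
      using u by (intro integrable_mult_left integrable_abs)
    then show "integrable lborel (\<lambda>x. \<integral>y. norm (u (fst (x, y)) * v (snd (x, y))) \<partial>lborel)"
      by (simp add: abs_mult)
    show "AE x in lborel. integrable lborel (\<lambda>y. u (fst (x, y)) * v (snd (x, y)))"
      using v by (intro AE_I2) (simp add: integrable_mult_right)
  qed
  show "AE p in lborel \<Otimes>\<^sub>M lborel. norm (f p) \<le> norm (u (fst p) * v (snd p))"
  proof (intro AE_I2)
    fix p :: "'a \<times> 'b"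
    have "norm (f p) \<le> u (fst p) * v (snd p)" using bd[of "fst p" "snd p"] by simp
    also have "\<dots> \<le> norm (u (fst p) * v (snd p))" unfolding real_norm_def by (rule abs_ge_self)
    finally show "norm (f p) \<le> norm (u (fst p) * v (snd p))" .
  qed
qed


lemma cis_meas[measurable]: "cis \<in> borel_measurable borel"
  by (intro borel_measurable_continuous_onI continuous_intros)

lemma cnj_meas[measurable]: "cnj \<in> borel_measurable borel"
  by (intro borel_measurable_continuous_onI continuous_intros)

lemma gw_meas[measurable]: "gw a \<in> borel_measurable borel"
  unfolding gw_def divide_inverse by (intro borel_measurable_continuous_onI continuous_intros)

definition QQ :: "real \<Rightarrow> 'a::euclidean_space \<Rightarrow> real" where
  "QQ a \<zeta> = (\<Prod>b\<in>Basis. a * sqrt (2 * pi) * exp (- (a * (\<zeta> \<bullet> b))\<^sup>2 / 2))"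

lemma QQ_meas[measurable]: "QQ a \<in> borel_measurable borel"
  unfolding QQ_def by (intro borel_measurable_continuous_onI continuous_intros) auto

lemma QQ_nonneg: "a > 0 \<Longrightarrow> QQ a \<zeta> \<ge> 0"
  unfolding QQ_def by (intro prod_nonneg) auto

lemma gauss_ft_QQ: "a > 0 \<Longrightarrow> (\<integral>x. complex_of_real (gw a x) * cis (x \<bullet> \<zeta>) \<partial>lborel) = complex_of_real (QQ a \<zeta>)"
  unfolding QQ_def by (rule gauss_ft)

lemma L2_weighted:
  fixes t a :: real
  assumes t: "t > 0" and a: "a > 0"
  shows "(\<integral>x. gw a (x::'a::euclidean_space) * (cmod (FF t x))\<^sup>2 \<partial>lborel) =
     (\<integral>\<xi>. gk t (\<xi>::'a) * (\<integral>\<eta>. gk t \<eta> * QQ a (\<xi> - \<eta>) \<partial>lborel) \<partial>lborel)"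
    (is "?L = (\<integral>\<xi>. gk t \<xi> * ?H \<xi> \<partial>lborel)")
proof -
  define Ig where "Ig = (\<integral>\<xi>. gk t (\<xi>::'a) \<partial>lborel)"
  have Fb: "cmod (FF t x) \<le> Ig" for x :: 'a unfolding Ig_def by (rule FF_bound)
  have gi: "integrable lborel (gk t :: 'a \<Rightarrow> real)" by (rule integrable_gk[OF t])
  have wi: "integrable lborel (gw a :: 'a \<Rightarrow> real)" by (rule integrable_gw[OF a])
  have gi': "integrable lborel (\<lambda>y::'a. gk t y * Ig)" using gi by (rule integrable_mult_left)
  have inner: "(\<integral>x. complex_of_real (gw a x) * cis (x \<bullet> \<xi>) * cnj (FF t x) \<partial>lborel)
      = complex_of_real (?H \<xi>)" for \<xi> :: 'a
  proof -
    have "(\<integral>x. complex_of_real (gw a x) * cis (x \<bullet> \<xi>) * cnj (FF t x) \<partial>lborel)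
       = (\<integral>x. (\<integral>\<eta>. complex_of_real (gw a x) * complex_of_real (gk t \<eta>) * cis (x \<bullet> (\<xi> - \<eta>)) \<partial>lborel) \<partial>lborel)"
    proof (rule Bochner_Integration.integral_cong[OF refl])
      fix x :: 'a
      have "cnj (FF t x) = (\<integral>\<eta>. complex_of_real (gk t \<eta>) * cis (- (x \<bullet> \<eta>)) \<partial>lborel)"
        unfolding FF_def Bochner_Integration.integral_cnj[symmetric] by (simp add: cis_cnj)
      then have "complex_of_real (gw a x) * cis (x \<bullet> \<xi>) * cnj (FF t x) =
         (\<integral>\<eta>. complex_of_real (gw a x) * cis (x \<bullet> \<xi>) * (complex_of_real (gk t \<eta>) * cis (- (x \<bullet> \<eta>))) \<partial>lborel)"
        by simp
      also have "\<dots> = (\<integral>\<eta>. complex_of_real (gw a x) * complex_of_real (gk t \<eta>) * cis (x \<bullet> (\<xi> - \<eta>)) \<partial>lborel)"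
        by (rule Bochner_Integration.integral_cong[OF refl])
           (simp add: inner_diff_right cis_mult algebra_simps)
      finally show "complex_of_real (gw a x) * cis (x \<bullet> \<xi>) * cnj (FF t x) =
         (\<integral>\<eta>. complex_of_real (gw a x) * complex_of_real (gk t \<eta>) * cis (x \<bullet> (\<xi> - \<eta>)) \<partial>lborel)" .
    qed
    also have "\<dots> = (\<integral>\<eta>. (\<integral>x. complex_of_real (gw a x) * complex_of_real (gk t \<eta>) * cis (x \<bullet> (\<xi> - \<eta>)) \<partial>lborel) \<partial>lborel)"
    proof (rule lborel_pair.Fubini_integral[symmetric])
      show "integrable (lborel \<Otimes>\<^sub>M lborel) (\<lambda>(x::'a, \<eta>::'a). complex_of_real (gw a x) * complex_of_real (gk t \<eta>) * cis (x \<bullet> (\<xi> - \<eta>)))"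
      proof (rule integrable_pair_bound[OF _ wi gi])
        show "(\<lambda>(x, \<eta>). complex_of_real (gw a x) * complex_of_real (gk t \<eta>) * cis (x \<bullet> (\<xi> - \<eta>))) \<in> borel_measurable (lborel \<Otimes>\<^sub>M lborel)"
          by measurable
        show "norm ((\<lambda>(x, \<eta>). complex_of_real (gw a x) * complex_of_real (gk t \<eta>) * cis (x \<bullet> (\<xi> - \<eta>))) (x, y)) \<le> gw a x * gk t y" for x y :: 'a
          by (simp add: norm_mult abs_of_pos gw_pos gk_pos)
      qed
    qed
    also have "\<dots> = (\<integral>\<eta>. complex_of_real (gk t \<eta> * QQ a (\<xi> - \<eta>)) \<partial>lborel)"
    proof (rule Bochner_Integration.integral_cong[OF refl])
      fix \<eta> :: 'a
      have "(\<integral>x. complex_of_real (gw a x) * complex_of_real (gk t \<eta>) * cis (x \<bullet> (\<xi> - \<eta>)) \<partial>lborel)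
         = complex_of_real (gk t \<eta>) * (\<integral>x. complex_of_real (gw a x) * cis (x \<bullet> (\<xi> - \<eta>)) \<partial>lborel)"
        by (simp add: mult.assoc mult.left_commute)
      also have "\<dots> = complex_of_real (gk t \<eta> * QQ a (\<xi> - \<eta>))"
        by (simp add: gauss_ft_QQ[OF a])
      finally show "(\<integral>x. complex_of_real (gw a x) * complex_of_real (gk t \<eta>) * cis (x \<bullet> (\<xi> - \<eta>)) \<partial>lborel)
         = complex_of_real (gk t \<eta> * QQ a (\<xi> - \<eta>))" .
    qed
    also have "\<dots> = complex_of_real (?H \<xi>)" by (rule integral_complex_of_real)
    finally show ?thesis .
  qed
  have "complex_of_real ?L = (\<integral>x. complex_of_real (gw a (x::'a)) * (FF t x * cnj (FF t x)) \<partial>lborel)"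
    by (subst integral_complex_of_real[symmetric]) (simp only: of_real_mult complex_norm_square)
  also have "\<dots> = (\<integral>x. (\<integral>\<xi>. complex_of_real (gk t (\<xi>::'a)) * (complex_of_real (gw a (x::'a)) * cis (x \<bullet> \<xi>) * cnj (FF t x)) \<partial>lborel) \<partial>lborel)"
  proof (rule Bochner_Integration.integral_cong[OF refl])
    fix x :: 'a
    show "complex_of_real (gw a x) * (FF t x * cnj (FF t x)) =
       (\<integral>\<xi>. complex_of_real (gk t \<xi>) * (complex_of_real (gw a x) * cis (x \<bullet> \<xi>) * cnj (FF t x)) \<partial>lborel)"
    proof -
      have "complex_of_real (gw a x) * (FF t x * cnj (FF t x)) = FF t x * (complex_of_real (gw a x) * cnj (FF t x))"
        by (simp only: mult_ac)
      also have "\<dots> = (\<integral>\<xi>. complex_of_real (gk t \<xi>) * cis (x \<bullet> \<xi>) \<partial>lborel) * (complex_of_real (gw a x) * cnj (FF t x))"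
        by (simp only: FF_def)
      also have "\<dots> = (\<integral>\<xi>. complex_of_real (gk t \<xi>) * cis (x \<bullet> \<xi>) * (complex_of_real (gw a x) * cnj (FF t x)) \<partial>lborel)"
        by (rule integral_mult_left_zero[symmetric])
      also have "\<dots> = (\<integral>\<xi>. complex_of_real (gk t \<xi>) * (complex_of_real (gw a x) * cis (x \<bullet> \<xi>) * cnj (FF t x)) \<partial>lborel)"
        by (rule Bochner_Integration.integral_cong[OF refl]) (simp only: mult_ac)
      finally show ?thesis .
    qed
  qed
  also have "\<dots> = (\<integral>\<xi>. (\<integral>x. complex_of_real (gk t (\<xi>::'a)) * (complex_of_real (gw a (x::'a)) * cis (x \<bullet> \<xi>) * cnj (FF t x)) \<partial>lborel) \<partial>lborel)"
  proof (rule lborel_pair.Fubini_integral[symmetric])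
    show "integrable (lborel \<Otimes>\<^sub>M lborel) (\<lambda>(x::'a, \<xi>::'a). complex_of_real (gk t \<xi>) * (complex_of_real (gw a x) * cis (x \<bullet> \<xi>) * cnj (FF t x)))"
    proof (rule integrable_pair_bound[OF _ wi gi'])
      show "(\<lambda>(x, \<xi>). complex_of_real (gk t \<xi>) * (complex_of_real (gw a x) * cis (x \<bullet> \<xi>) * cnj (FF t x))) \<in> borel_measurable (lborel \<Otimes>\<^sub>M lborel)"
        by measurable
      show "norm ((\<lambda>(x, \<xi>). complex_of_real (gk t \<xi>) * (complex_of_real (gw a x) * cis (x \<bullet> \<xi>) * cnj (FF t x))) (x, y)) \<le> gw a x * (gk t y * Ig)" for x y :: 'a
      proof -
        have "norm ((\<lambda>(x, \<xi>). complex_of_real (gk t \<xi>) * (complex_of_real (gw a x) * cis (x \<bullet> \<xi>) * cnj (FF t x))) (x, y))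
           = gk t y * (gw a x * cmod (FF t x))"
          by (simp add: norm_mult abs_of_pos gw_pos gk_pos)
        also have "\<dots> \<le> gk t y * (gw a x * Ig)"
          using Fb[of x] gw_pos[of a x] gk_pos[of t y] by (intro mult_left_mono) auto
        finally show ?thesis by (simp add: algebra_simps)
      qed
    qed
  qed
  also have "\<dots> = (\<integral>\<xi>. complex_of_real (gk t \<xi> * ?H \<xi>) \<partial>lborel)"
    by (rule Bochner_Integration.integral_cong[OF refl]) (simp add: inner)
  also have "\<dots> = complex_of_real (\<integral>\<xi>. gk t \<xi> * ?H \<xi> \<partial>lborel)" by (rule integral_complex_of_real)
  finally show ?thesis by simp
qed


lemma nn_integral_shift:
  fixes f :: "'a::euclidean_space \<Rightarrow> ennreal"
  assumes [measurable]: "f \<in> borel_measurable borel"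
  shows "(\<integral>\<^sup>+\<xi>. f (\<xi> - \<eta>) \<partial>lborel) = (\<integral>\<^sup>+\<xi>. f \<xi> \<partial>lborel)"
proof -
  have "(\<integral>\<^sup>+\<xi>. f \<xi> \<partial>lborel) = (\<integral>\<^sup>+\<xi>. f \<xi> \<partial>distr lborel borel ((+) (- \<eta>)))"
    by (simp add: lborel_distr_plus)
  also have "\<dots> = (\<integral>\<^sup>+\<xi>. f (- \<eta> + \<xi>) \<partial>lborel)"
    by (rule nn_integral_distr) auto
  finally show ?thesis by (simp add: algebra_simps)
qed

lemma QQ_even: "QQ a (- \<zeta>) = QQ a \<zeta>"
  unfolding QQ_def by (simp add: power_mult_distrib)

lemma QQ_le: fixes \<zeta> :: "'a::euclidean_space" assumes a: "a > 0" shows "QQ a \<zeta> \<le> (a * sqrt (2 * pi)) ^ DIM('a)"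
proof -
  have "QQ a \<zeta> \<le> (\<Prod>b\<in>(Basis::'a set). a * sqrt (2 * pi))"
    unfolding QQ_def
  proof (rule prod_mono)
    fix b :: 'a
    have "exp (- (a * (\<zeta> \<bullet> b))\<^sup>2 / 2) \<le> 1" by simp
    then show "0 \<le> a * sqrt (2 * pi) * exp (- (a * (\<zeta> \<bullet> b))\<^sup>2 / 2) \<and>
        a * sqrt (2 * pi) * exp (- (a * (\<zeta> \<bullet> b))\<^sup>2 / 2) \<le> a * sqrt (2 * pi)"
      using a by (auto intro: mult_left_le)
  qed
  then show ?thesis by simp
qed

lemma nn_integral_QQ: assumes a: "a > 0"
  shows "(\<integral>\<^sup>+\<zeta>. ennreal (QQ a (\<zeta>::'a::euclidean_space)) \<partial>lborel) = ennreal ((2 * pi) ^ DIM('a))"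
proof -
  have "(\<integral>\<^sup>+\<zeta>. ennreal (QQ a (\<zeta>::'a)) \<partial>lborel) =
      (\<integral>\<^sup>+\<zeta>. (\<Prod>b\<in>Basis. ennreal (a * sqrt (2 * pi) * exp (- (a * ((\<zeta>::'a) \<bullet> b))\<^sup>2 / 2))) \<partial>lborel)"
    unfolding QQ_def using a by (simp add: prod_ennreal)
  also have "\<dots> = (\<Prod>b\<in>(Basis::'a set). (\<integral>\<^sup>+y. ennreal (a * sqrt (2 * pi) * exp (- (a * y)\<^sup>2 / 2)) \<partial>lborel))"
    by (rule nn_integral_lborel_prod[where f="\<lambda>b y. ennreal (a * sqrt (2 * pi) * exp (- (a * y)\<^sup>2 / 2))"]) auto
  also have "(\<integral>\<^sup>+y. ennreal (a * sqrt (2 * pi) * exp (- (a * y)\<^sup>2 / 2)) \<partial>lborel) = ennreal (2 * pi)"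
  proof -
    have "(\<integral>\<^sup>+y. ennreal (a * sqrt (2 * pi) * exp (- (a * y)\<^sup>2 / 2)) \<partial>lborel)
        = (\<integral>\<^sup>+y. ennreal (a * (2 * pi)) * ennreal (std_normal_density (0 + a * y)) \<partial>lborel)"
    proof (rule nn_integral_cong)
      fix y :: real
      have "a * sqrt (2 * pi) * exp (- (a * y)\<^sup>2 / 2) = a * (2 * pi) * std_normal_density (0 + a * y)"
        by (simp add: std_normal_density_def field_simps real_sqrt_mult[symmetric])
      then show "ennreal (a * sqrt (2 * pi) * exp (- (a * y)\<^sup>2 / 2)) =
          ennreal (a * (2 * pi)) * ennreal (std_normal_density (0 + a * y))"
        using a by (simp add: ennreal_mult[symmetric])
    qed
    also have "\<dots> = ennreal (a * (2 * pi)) * (\<integral>\<^sup>+y. ennreal (std_normal_density (0 + a * y)) \<partial>lborel)"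
      by (rule nn_integral_cmult) simp
    also have "(\<integral>\<^sup>+y. ennreal (std_normal_density (0 + a * y)) \<partial>lborel) = ennreal (1 / a)"
    proof -
      have "(\<integral>\<^sup>+y. ennreal (std_normal_density y) \<partial>lborel) =
          ennreal \<bar>a\<bar> * (\<integral>\<^sup>+y. ennreal (std_normal_density (0 + a * y)) \<partial>lborel)"
        using a by (intro nn_integral_real_affine) auto
      moreover have "(\<integral>\<^sup>+y. ennreal (std_normal_density y) \<partial>lborel) = 1"
        by (subst nn_integral_eq_integral) auto
      ultimately have "ennreal a * (\<integral>\<^sup>+y. ennreal (std_normal_density (0 + a * y)) \<partial>lborel) = 1"
        using a by simp
      then have "ennreal (1/a) * (ennreal a * (\<integral>\<^sup>+y. ennreal (std_normal_density (0 + a * y)) \<partial>lborel)) = ennreal (1/a)"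
        by simp
      then show ?thesis using a by (simp add: mult.assoc[symmetric] ennreal_mult[symmetric])
    qed
    finally show ?thesis using a by (simp add: ennreal_mult[symmetric])
  qed
  finally show ?thesis by (simp add: ennreal_power power_mult_distrib)
qed


lemma L2_weighted_bound:
  fixes t a :: real
  assumes t: "t > 0" and a: "a > 0"
  shows "(\<integral>\<^sup>+x. ennreal (gw a (x::'a::euclidean_space) * (cmod (FF t x))\<^sup>2) \<partial>lborel)
     \<le> 2 * ennreal ((2 * pi) ^ DIM('a)) * (\<integral>\<^sup>+\<xi>. ennreal ((gk t (\<xi>::'a))\<^sup>2) \<partial>lborel)"
proof -
  define Ig where "Ig = (\<integral>\<xi>. gk t (\<xi>::'a) \<partial>lborel)"
  define Qm where "Qm = (a * sqrt (2 * pi)) ^ DIM('a)"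
  define P where "P = ennreal ((2 * pi) ^ DIM('a))"
  define H where "H = (\<lambda>\<xi>::'a. \<integral>\<eta>. gk t \<eta> * QQ a (\<xi> - \<eta>) \<partial>lborel)"
  have Fb: "cmod (FF t x) \<le> Ig" for x :: 'a unfolding Ig_def by (rule FF_bound)
  have gi: "integrable lborel (gk t :: 'a \<Rightarrow> real)" by (rule integrable_gk[OF t])
  have wi: "integrable lborel (gw a :: 'a \<Rightarrow> real)" by (rule integrable_gw[OF a])
  have Qle: "QQ a \<zeta> \<le> Qm" for \<zeta> :: 'a unfolding Qm_def by (rule QQ_le[OF a])
  have Q0: "QQ a \<zeta> \<ge> 0" for \<zeta> :: 'a by (rule QQ_nonneg[OF a])
  have Qm0: "Qm \<ge> 0" using Q0 Qle order_trans by blast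
  have int1: "integrable lborel (\<lambda>x::'a. gw a x * (cmod (FF t x))\<^sup>2)"
  proof (rule Bochner_Integration.integrable_bound)
    show "integrable lborel (\<lambda>x::'a. gw a x * Ig\<^sup>2)" using wi by (rule integrable_mult_left)
    show "(\<lambda>x::'a. gw a x * (cmod (FF t x))\<^sup>2) \<in> borel_measurable lborel" by measurable
    show "AE x in lborel. norm (gw a x * (cmod (FF t x))\<^sup>2) \<le> norm (gw a (x::'a) * Ig\<^sup>2)"
    proof (intro AE_I2)
      fix x :: 'a
      have "(cmod (FF t x))\<^sup>2 \<le> Ig\<^sup>2" using Fb[of x] by (intro power_mono) auto
      then show "norm (gw a x * (cmod (FF t x))\<^sup>2) \<le> norm (gw a x * Ig\<^sup>2)"
        using gw_pos[of a x] by (simp add: abs_mult abs_of_pos)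
    qed
  qed
  have intH: "integrable lborel (\<lambda>\<eta>. gk t \<eta> * QQ a (\<xi> - \<eta>))" for \<xi> :: 'a
  proof (rule Bochner_Integration.integrable_bound)
    show "integrable lborel (\<lambda>\<eta>::'a. gk t \<eta> * Qm)" using gi by (rule integrable_mult_left)
    show "(\<lambda>\<eta>. gk t \<eta> * QQ a (\<xi> - \<eta>)) \<in> borel_measurable lborel" by measurable
    show "AE \<eta> in lborel. norm (gk t \<eta> * QQ a (\<xi> - \<eta>)) \<le> norm (gk t \<eta> * Qm)"
      using gk_pos Q0 Qle Qm0 by (intro AE_I2) (simp add: abs_mult mult_left_mono)
  qed
  have H0: "H \<xi> \<ge> 0" for \<xi> unfolding H_def by (intro integral_nonneg_AE AE_I2 mult_nonneg_nonneg Q0 less_imp_le[OF gk_pos])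
  have Hle: "H \<xi> \<le> Ig * Qm" for \<xi>
  proof -
    have "H \<xi> \<le> (\<integral>\<eta>. gk t (\<eta>::'a) * Qm \<partial>lborel)" unfolding H_def
    proof (rule integral_mono)
      show "integrable lborel (\<lambda>\<eta>. gk t \<eta> * QQ a (\<xi> - \<eta>))" by (rule intH)
      show "integrable lborel (\<lambda>\<eta>::'a. gk t \<eta> * Qm)" using gi by (rule integrable_mult_left)
      show "gk t \<eta> * QQ a (\<xi> - \<eta>) \<le> gk t \<eta> * Qm" for \<eta>
        by (rule mult_left_mono[OF Qle less_imp_le[OF gk_pos]])
    qed
    also have "\<dots> = Ig * Qm" by (simp add: Ig_def)
    finally show ?thesis .
  qed
  have Hm[measurable]: "H \<in> borel_measurable borel"
    unfolding H_def by (rule lborel.borel_measurable_lebesgue_integral) measurable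
  have int2: "integrable lborel (\<lambda>\<xi>. gk t \<xi> * H \<xi>)"
  proof (rule Bochner_Integration.integrable_bound)
    show "integrable lborel (\<lambda>\<xi>::'a. gk t \<xi> * (Ig * Qm))" using gi by (rule integrable_mult_left)
    show "(\<lambda>\<xi>. gk t \<xi> * H \<xi>) \<in> borel_measurable lborel" by measurable
    show "AE \<xi> in lborel. norm (gk t \<xi> * H \<xi>) \<le> norm (gk t \<xi> * (Ig * Qm))"
    proof (intro AE_I2)
      fix \<xi> :: 'a
      have "H \<xi> \<le> \<bar>Ig * Qm\<bar>" using Hle[of \<xi>] abs_ge_self order_trans by blast
      then have "\<bar>gk t \<xi>\<bar> * \<bar>H \<xi>\<bar> \<le> \<bar>gk t \<xi>\<bar> * \<bar>Ig * Qm\<bar>"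
        using H0[of \<xi>] by (intro mult_left_mono) auto
      then show "norm (gk t \<xi> * H \<xi>) \<le> norm (gk t \<xi> * (Ig * Qm))"
        by (simp only: real_norm_def abs_mult[of "gk t \<xi>"])
    qed
  qed
  have PQ1: "(\<integral>\<^sup>+\<eta>. ennreal (QQ a (\<xi> - \<eta>)) \<partial>lborel) = P" for \<xi> :: 'a
  proof -
    have "(\<integral>\<^sup>+\<eta>. ennreal (QQ a (\<xi> - \<eta>)) \<partial>lborel) = (\<integral>\<^sup>+\<eta>. ennreal (QQ a (\<eta> - \<xi>)) \<partial>lborel)"
      by (metis QQ_even minus_diff_eq)
    also have "\<dots> = (\<integral>\<^sup>+\<eta>. ennreal (QQ a (\<eta>::'a)) \<partial>lborel)"
      by (rule nn_integral_shift[where f="\<lambda>\<zeta>. ennreal (QQ a \<zeta>)"]) measurable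
    finally show ?thesis unfolding P_def using nn_integral_QQ[OF a] by simp
  qed
  have PQ2: "(\<integral>\<^sup>+\<xi>. ennreal (QQ a (\<xi> - \<eta>)) \<partial>lborel) = P" for \<eta> :: 'a
    unfolding P_def using nn_integral_QQ[OF a]
    by (subst nn_integral_shift[where f="\<lambda>\<zeta>. ennreal (QQ a \<zeta>)"]) auto
  have "(\<integral>\<^sup>+x. ennreal (gw a (x::'a) * (cmod (FF t x))\<^sup>2) \<partial>lborel) = ennreal (\<integral>x. gw a (x::'a) * (cmod (FF t x))\<^sup>2 \<partial>lborel)"
    using int1 by (intro nn_integral_eq_integral AE_I2 mult_nonneg_nonneg less_imp_le[OF gw_pos] zero_le_power2)
  also have "\<dots> = ennreal (\<integral>\<xi>. gk t \<xi> * H \<xi> \<partial>lborel)"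
    unfolding H_def by (simp only: L2_weighted[OF t a])
  also have "\<dots> = (\<integral>\<^sup>+\<xi>. ennreal (gk t \<xi> * H \<xi>) \<partial>lborel)"
    using int2 by (intro nn_integral_eq_integral[symmetric] AE_I2 mult_nonneg_nonneg less_imp_le[OF gk_pos] H0)
  also have "\<dots> = (\<integral>\<^sup>+\<xi>. (\<integral>\<^sup>+\<eta>. ennreal (gk t (\<xi>::'a) * (gk t \<eta> * QQ a (\<xi> - \<eta>))) \<partial>lborel) \<partial>lborel)"
  proof (rule nn_integral_cong)
    fix \<xi> :: 'a
    have hH: "ennreal (H \<xi>) = (\<integral>\<^sup>+\<eta>. ennreal (gk t \<eta> * QQ a (\<xi> - \<eta>)) \<partial>lborel)"
      unfolding H_def using intH[of \<xi>]
      by (intro nn_integral_eq_integral[symmetric] AE_I2 mult_nonneg_nonneg less_imp_le[OF gk_pos] Q0)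
    then have "ennreal (gk t \<xi> * H \<xi>) = ennreal (gk t \<xi>) * (\<integral>\<^sup>+\<eta>. ennreal (gk t \<eta> * QQ a (\<xi> - \<eta>)) \<partial>lborel)"
      by (simp only: ennreal_mult[OF less_imp_le[OF gk_pos] H0] hH)
    also have "\<dots> = (\<integral>\<^sup>+\<eta>. ennreal (gk t \<xi>) * ennreal (gk t \<eta> * QQ a (\<xi> - \<eta>)) \<partial>lborel)"
      by (rule nn_integral_cmult[symmetric]) measurable
    also have "\<dots> = (\<integral>\<^sup>+\<eta>. ennreal (gk t \<xi> * (gk t \<eta> * QQ a (\<xi> - \<eta>))) \<partial>lborel)"
      by (intro nn_integral_cong) (simp only: ennreal_mult[OF less_imp_le[OF gk_pos] mult_nonneg_nonneg[OF less_imp_le[OF gk_pos] Q0]])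
    finally show "ennreal (gk t \<xi> * H \<xi>) = (\<integral>\<^sup>+\<eta>. ennreal (gk t \<xi> * (gk t \<eta> * QQ a (\<xi> - \<eta>))) \<partial>lborel)" .
  qed
  also have "\<dots> \<le> (\<integral>\<^sup>+\<xi>. (\<integral>\<^sup>+\<eta>. ennreal ((gk t (\<xi>::'a))\<^sup>2 * QQ a (\<xi> - \<eta>)) + ennreal ((gk t \<eta>)\<^sup>2 * QQ a (\<xi> - \<eta>)) \<partial>lborel) \<partial>lborel)"
  proof (intro nn_integral_mono)
    fix \<xi> \<eta> :: 'a
    have "gk t \<xi> * gk t \<eta> \<le> (gk t \<xi>)\<^sup>2 + (gk t \<eta>)\<^sup>2"
    proof -
      have "0 \<le> (gk t \<xi> - gk t \<eta>)\<^sup>2" by simp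
      then have "2 * (gk t \<xi> * gk t \<eta>) \<le> (gk t \<xi>)\<^sup>2 + (gk t \<eta>)\<^sup>2" by (simp add: power2_diff)
      moreover have "0 \<le> gk t \<xi> * gk t \<eta>" by (intro mult_nonneg_nonneg less_imp_le[OF gk_pos])
      ultimately show ?thesis by linarith
    qed
    then have "gk t \<xi> * (gk t \<eta> * QQ a (\<xi> - \<eta>)) \<le> (gk t \<xi>)\<^sup>2 * QQ a (\<xi> - \<eta>) + (gk t \<eta>)\<^sup>2 * QQ a (\<xi> - \<eta>)"
      using Q0[of "\<xi> - \<eta>"] by (simp add: mult_right_mono distrib_right[symmetric] mult.assoc[symmetric])
    then show "ennreal (gk t \<xi> * (gk t \<eta> * QQ a (\<xi> - \<eta>))) \<le> ennreal ((gk t \<xi>)\<^sup>2 * QQ a (\<xi> - \<eta>)) + ennreal ((gk t \<eta>)\<^sup>2 * QQ a (\<xi> - \<eta>))"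
      apply (subst ennreal_plus[symmetric])
        apply (intro mult_nonneg_nonneg zero_le_power2 Q0)
       apply (intro mult_nonneg_nonneg zero_le_power2 Q0)
      apply (rule ennreal_leI)
      apply assumption
      done
  qed
  also have "\<dots> = (\<integral>\<^sup>+\<xi>. (\<integral>\<^sup>+\<eta>. ennreal ((gk t (\<xi>::'a))\<^sup>2 * QQ a (\<xi> - \<eta>)) \<partial>lborel) \<partial>lborel)
        + (\<integral>\<^sup>+\<xi>. (\<integral>\<^sup>+\<eta>. ennreal ((gk t (\<eta>::'a))\<^sup>2 * QQ a (\<xi> - \<eta>)) \<partial>lborel) \<partial>lborel)"
  proof -
    have "(\<integral>\<^sup>+\<xi>. (\<integral>\<^sup>+\<eta>. ennreal ((gk t (\<xi>::'a))\<^sup>2 * QQ a (\<xi> - \<eta>)) + ennreal ((gk t \<eta>)\<^sup>2 * QQ a (\<xi> - \<eta>)) \<partial>lborel) \<partial>lborel)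
      = (\<integral>\<^sup>+\<xi>. (\<integral>\<^sup>+\<eta>. ennreal ((gk t (\<xi>::'a))\<^sup>2 * QQ a (\<xi> - \<eta>)) \<partial>lborel) + (\<integral>\<^sup>+\<eta>. ennreal ((gk t \<eta>)\<^sup>2 * QQ a (\<xi> - \<eta>)) \<partial>lborel) \<partial>lborel)"
      by (intro nn_integral_cong nn_integral_add; measurable)
    also have "\<dots> = (\<integral>\<^sup>+\<xi>. (\<integral>\<^sup>+\<eta>. ennreal ((gk t (\<xi>::'a))\<^sup>2 * QQ a (\<xi> - \<eta>)) \<partial>lborel) \<partial>lborel)
        + (\<integral>\<^sup>+\<xi>. (\<integral>\<^sup>+\<eta>. ennreal ((gk t (\<eta>::'a))\<^sup>2 * QQ a (\<xi> - \<eta>)) \<partial>lborel) \<partial>lborel)"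
      by (rule nn_integral_add; measurable)
    finally show ?thesis .
  qed
  also have "(\<integral>\<^sup>+\<xi>. (\<integral>\<^sup>+\<eta>. ennreal ((gk t (\<xi>::'a))\<^sup>2 * QQ a (\<xi> - \<eta>)) \<partial>lborel) \<partial>lborel) = P * (\<integral>\<^sup>+\<xi>. ennreal ((gk t (\<xi>::'a))\<^sup>2) \<partial>lborel)"
  proof -
    have "(\<integral>\<^sup>+\<xi>. (\<integral>\<^sup>+\<eta>. ennreal ((gk t (\<xi>::'a))\<^sup>2 * QQ a (\<xi> - \<eta>)) \<partial>lborel) \<partial>lborel)
       = (\<integral>\<^sup>+\<xi>. ennreal ((gk t (\<xi>::'a))\<^sup>2) * P \<partial>lborel)"
    proof (rule nn_integral_cong)
      fix \<xi> :: 'a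
      have "(\<integral>\<^sup>+\<eta>. ennreal ((gk t \<xi>)\<^sup>2 * QQ a (\<xi> - \<eta>)) \<partial>lborel) = (\<integral>\<^sup>+\<eta>. ennreal ((gk t \<xi>)\<^sup>2) * ennreal (QQ a (\<xi> - \<eta>)) \<partial>lborel)"
        by (intro nn_integral_cong) (simp only: ennreal_mult[OF zero_le_power2 Q0])
      also have "\<dots> = ennreal ((gk t \<xi>)\<^sup>2) * (\<integral>\<^sup>+\<eta>. ennreal (QQ a (\<xi> - \<eta>)) \<partial>lborel)"
        by (rule nn_integral_cmult) measurable
      finally show "(\<integral>\<^sup>+\<eta>. ennreal ((gk t \<xi>)\<^sup>2 * QQ a (\<xi> - \<eta>)) \<partial>lborel) = ennreal ((gk t \<xi>)\<^sup>2) * P"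
        by (simp add: PQ1)
    qed
    also have "\<dots> = P * (\<integral>\<^sup>+\<xi>. ennreal ((gk t (\<xi>::'a))\<^sup>2) \<partial>lborel)"
      by (subst nn_integral_multc) (auto simp: mult.commute)
    finally show ?thesis .
  qed
  also have "(\<integral>\<^sup>+\<xi>. (\<integral>\<^sup>+\<eta>. ennreal ((gk t (\<eta>::'a))\<^sup>2 * QQ a (\<xi> - \<eta>)) \<partial>lborel) \<partial>lborel) = P * (\<integral>\<^sup>+\<xi>. ennreal ((gk t (\<xi>::'a))\<^sup>2) \<partial>lborel)"
  proof -
    have "(\<integral>\<^sup>+\<xi>. (\<integral>\<^sup>+\<eta>. ennreal ((gk t (\<eta>::'a))\<^sup>2 * QQ a (\<xi> - \<eta>)) \<partial>lborel) \<partial>lborel)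
       = (\<integral>\<^sup>+\<eta>. (\<integral>\<^sup>+\<xi>. ennreal ((gk t \<eta>)\<^sup>2 * QQ a ((\<xi>::'a) - \<eta>)) \<partial>lborel) \<partial>lborel)"
      by (rule lborel_pair.Fubini'[symmetric]) measurable
    also have "\<dots> = (\<integral>\<^sup>+\<eta>. ennreal ((gk t (\<eta>::'a))\<^sup>2) * P \<partial>lborel)"
    proof (rule nn_integral_cong)
      fix \<eta> :: 'a
      have "(\<integral>\<^sup>+\<xi>. ennreal ((gk t \<eta>)\<^sup>2 * QQ a (\<xi> - \<eta>)) \<partial>lborel) = (\<integral>\<^sup>+\<xi>. ennreal ((gk t \<eta>)\<^sup>2) * ennreal (QQ a (\<xi> - \<eta>)) \<partial>lborel)"
        by (intro nn_integral_cong) (simp only: ennreal_mult[OF zero_le_power2 Q0])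
      also have "\<dots> = ennreal ((gk t \<eta>)\<^sup>2) * (\<integral>\<^sup>+\<xi>. ennreal (QQ a (\<xi> - \<eta>)) \<partial>lborel)"
        by (rule nn_integral_cmult) measurable
      finally show "(\<integral>\<^sup>+\<xi>. ennreal ((gk t \<eta>)\<^sup>2 * QQ a (\<xi> - \<eta>)) \<partial>lborel) = ennreal ((gk t \<eta>)\<^sup>2) * P"
        by (simp add: PQ2)
    qed
    also have "\<dots> = P * (\<integral>\<^sup>+\<xi>. ennreal ((gk t (\<xi>::'a))\<^sup>2) \<partial>lborel)"
      by (subst nn_integral_multc) (auto simp: mult.commute)
    finally show ?thesis .
  qed
  also have "P * (\<integral>\<^sup>+\<xi>. ennreal ((gk t (\<xi>::'a))\<^sup>2) \<partial>lborel) + P * (\<integral>\<^sup>+\<xi>. ennreal ((gk t (\<xi>::'a))\<^sup>2) \<partial>lborel)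
     = 2 * P * (\<integral>\<^sup>+\<xi>. ennreal ((gk t (\<xi>::'a))\<^sup>2) \<partial>lborel)"
    by (simp only: mult_2 distrib_right)
  finally show ?thesis unfolding P_def .
qed


lemma inv_sq_lim: "(\<lambda>n. inverse (2 * (real n + 1)\<^sup>2)) \<longlonglongrightarrow> (0::real)"
proof -
  have "(\<lambda>n. (1/2) * inverse (real (Suc n)) * inverse (real (Suc n))) \<longlonglongrightarrow> (1/2) * 0 * (0::real)"
    by (intro tendsto_mult tendsto_const LIMSEQ_inverse_real_of_nat)
  moreover have "inverse (2 * (real n + 1)\<^sup>2) = (1/2) * inverse (real (Suc n)) * inverse (real (Suc n))" for n
    by (simp add: power2_eq_square add.commute)
  ultimately show ?thesis by simp
qed

lemma gw_lim: "(\<lambda>n. gw (real n + 1) x) \<longlonglongrightarrow> 1"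
proof -
  have "(\<lambda>n. exp (- (norm x)\<^sup>2 * inverse (2 * (real n + 1)\<^sup>2))) \<longlonglongrightarrow> exp (- (norm x)\<^sup>2 * 0)"
    by (intro tendsto_exp tendsto_mult tendsto_const inv_sq_lim)
  then show ?thesis by (simp only: gw_def divide_inverse) simp
qed

lemma FF_L2: assumes t: "t > 0"
  shows "(\<integral>\<^sup>+x. ennreal ((cmod (FF t (x::'a::euclidean_space)))\<^sup>2) \<partial>lborel) < \<infinity>"
proof -
  define C where "C = 2 * ennreal ((2 * pi) ^ DIM('a)) * (\<integral>\<^sup>+\<xi>. ennreal ((gk t (\<xi>::'a))\<^sup>2) \<partial>lborel)"
  define u where "u = (\<lambda>n (x::'a). ennreal (gw (real n + 1) x * (cmod (FF t x))\<^sup>2))"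
  have Cfin: "C < \<infinity>"
  proof -
    have "(\<integral>\<^sup>+\<xi>. ennreal ((gk t (\<xi>::'a))\<^sup>2) \<partial>lborel) = (\<integral>\<^sup>+\<xi>. ennreal (gk (2 * t) (\<xi>::'a)) \<partial>lborel)"
      by (intro nn_integral_cong) (simp add: gk_def power2_eq_square exp_add[symmetric])
    also have "\<dots> < \<infinity>"
      using integrable_gk[of "2 * t", where 'a='a] t
      by (simp add: integrable_iff_bounded abs_of_pos gk_pos)
    finally show ?thesis unfolding C_def by (simp add: ennreal_mult_less_top)
  qed
  have "(\<integral>\<^sup>+x. ennreal ((cmod (FF t (x::'a)))\<^sup>2) \<partial>lborel) = (\<integral>\<^sup>+x. liminf (\<lambda>n. u n x) \<partial>lborel)"
  proof (intro nn_integral_cong)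
    fix x :: 'a
    have "(\<lambda>n. gw (real n + 1) x * (cmod (FF t x))\<^sup>2) \<longlonglongrightarrow> 1 * (cmod (FF t x))\<^sup>2"
      by (intro tendsto_mult gw_lim tendsto_const)
    then have "(\<lambda>n. u n x) \<longlonglongrightarrow> ennreal ((cmod (FF t x))\<^sup>2)"
      unfolding u_def by (intro tendsto_ennrealI) simp
    then show "ennreal ((cmod (FF t x))\<^sup>2) = liminf (\<lambda>n. u n x)"
      by (intro lim_imp_Liminf[symmetric]) simp_all
  qed
  also have "\<dots> \<le> liminf (\<lambda>n. integral\<^sup>N lborel (u n))"
    by (rule nn_integral_liminf) (simp add: u_def)
  also have "\<dots> \<le> C"
  proof -
    have "liminf (\<lambda>n. integral\<^sup>N lborel (u n)) \<le> limsup (\<lambda>n. integral\<^sup>N lborel (u n))"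
      by (rule Liminf_le_Limsup) simp
    also have "\<dots> \<le> C"
    proof (intro Limsup_bounded always_eventually allI)
      fix n :: nat
      show "integral\<^sup>N lborel (u n) \<le> C"
        unfolding u_def C_def by (rule L2_weighted_bound[OF t]) linarith
    qed
    finally show ?thesis .
  qed
  finally show ?thesis using Cfin by (rule le_less_trans)
qed


lemma upset_borel:
  fixes S :: "real set"
  assumes up: "\<And>x y. x \<in> S \<Longrightarrow> x \<le> y \<Longrightarrow> y \<in> S"
  shows "S \<in> sets borel"
proof (cases "bdd_below S \<and> S \<noteq> {}")
  case True
  define c where "c = Inf S"
  have eq: "S = {c<..} \<union> (S \<inter> {c})"
  proof (intro equalityI subsetI)
    fix x assume "x \<in> S"
    then have "c \<le> x" unfolding c_def using True by (intro cInf_lower) auto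
    then show "x \<in> {c<..} \<union> (S \<inter> {c})" using \<open>x \<in> S\<close> by auto
  next
    fix x assume "x \<in> {c<..} \<union> (S \<inter> {c})"
    then consider "c < x" | "x \<in> S" by auto
    then show "x \<in> S"
    proof cases
      case 1
      then obtain s where "s \<in> S" "s < x" unfolding c_def using True by (auto simp: cInf_less_iff)
      then show ?thesis using up by auto
    qed auto
  qed
  have "S \<inter> {c} \<in> sets borel"
  proof (cases "c \<in> S")
    case True then have "S \<inter> {c} = {c}" by auto
    then show ?thesis by simp
  next
    case False then have "S \<inter> {c} = {}" by auto
    then show ?thesis by simp
  qed
  then show ?thesis by (subst eq) auto
next
  case False
  show ?thesis
  proof (cases "S = {}")
    case False
    with \<open>\<not> (bdd_below S \<and> S \<noteq> {})\<close> have nb: "\<not> bdd_below S" by auto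
    have "S = UNIV"
    proof (intro equalityI subsetI)
      fix x :: real
      from nb obtain s where "s \<in> S" "\<not> x \<le> s" unfolding bdd_below_def by auto
      then show "x \<in> S" using up[of s x] by auto
    qed auto
    then show ?thesis by simp
  qed simp
qed

lemma mono_ennreal_meas:
  fixes f :: "real \<Rightarrow> ennreal"
  assumes "mono f" shows "f \<in> borel_measurable borel"
proof (rule borel_measurableI_greater)
  fix y :: ennreal
  have "{x. y < f x} \<in> sets borel"
    by (rule upset_borel) (use assms in \<open>auto dest: monoD intro: less_le_trans\<close>)
  then show "{x \<in> space borel. y < f x} \<in> sets borel" by simp
qed

lemma rearr2_meas: "rearr2 u \<in> borel_measurable borel"
proof -
  define F where "F = (\<lambda>r. \<integral>\<^sup>+\<eta>. rearr u \<eta> * indicator {0..r} \<eta> \<partial>lborel)"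
  have "mono F"
  proof (rule monoI)
    fix r r' :: real assume "r \<le> r'"
    show "F r \<le> F r'" unfolding F_def
      by (intro nn_integral_mono mult_left_mono) (use \<open>r \<le> r'\<close> in \<open>auto split: split_indicator\<close>)
  qed
  then have [measurable]: "F \<in> borel_measurable borel" by (rule mono_ennreal_meas)
  have "rearr2 u = (\<lambda>r. F r / ennreal r)" by (rule ext) (simp add: rearr2_def F_def)
  then show ?thesis by simp
qed

lemma Linfty_bounded:
  fixes u :: "'a::euclidean_space \<Rightarrow> 'b::real_normed_vector"
  assumes bd: "\<And>x. norm (u x) \<le> M"
  shows "Linfty_pos (rearr2 u)"
proof -
  define K where "K = max M 0 + 1"
  have K0: "K > 0" unfolding K_def by simp
  have "norm (u x) \<le> K" for x using bd[of x] unfolding K_def by linarith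
  then have "{x. norm (u x) > K} = {}" by (auto simp: not_less)
  then have dist: "distrib_fun u K = 0" by (simp add: distrib_fun_def)
  have rr: "rearr u r \<le> ennreal K" for r
    unfolding rearr_def by (rule INF_lower) (simp add: K0 dist)
  have "rearr2 u r \<le> ennreal K" if r: "r > 0" for r
  proof -
    have "(\<integral>\<^sup>+\<eta>. rearr u \<eta> * indicator {0..r} \<eta> \<partial>lborel) \<le> (\<integral>\<^sup>+\<eta>. ennreal K * indicator {0..r} \<eta> \<partial>lborel)"
      by (intro nn_integral_mono mult_right_mono rr) simp
    also have "\<dots> = ennreal K * ennreal r"
      using r by (subst nn_integral_cmult_indicator) auto
    finally have "rearr2 u r \<le> (ennreal K * ennreal r) / ennreal r"
      unfolding rearr2_def by (rule divide_right_mono_ennreal)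
    also have "\<dots> = ennreal K" using r by (intro ennreal_mult_divide_eq) auto
    finally show ?thesis .
  qed
  then have "AE r in lborel. r > 0 \<longrightarrow> rearr2 u r \<le> ennreal K" by auto
  moreover have "rearr2 u \<in> borel_measurable (restrict_space lborel {0<..})"
    by (rule measurable_restrict_space1) (simp add: rearr2_meas)
  ultimately show ?thesis unfolding Linfty_pos_def by blast
qed


lemma nn_integral_reflect:
  fixes f :: "'a::euclidean_space \<Rightarrow> ennreal"
  assumes [measurable]: "f \<in> borel_measurable borel"
  shows "(\<integral>\<^sup>+y. f (x - y) \<partial>lborel) = (\<integral>\<^sup>+y. f y \<partial>lborel)"
  by (subst lborel_affine[of "-1" x]) (simp_all add: nn_integral_density nn_integral_distr)

lemma kernel_eq: "biharm_kernel t = (\<lambda>x. complex_of_real (1 / (2 * pi) ^ DIM('a)) * FF t (x::'a::euclidean_space))"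
  unfolding biharm_kernel_def FF_def gk_def by (rule refl)

lemma kernel_meas[measurable]: "(biharm_kernel t :: 'a::euclidean_space \<Rightarrow> complex) \<in> borel_measurable borel"
  unfolding kernel_eq by measurable

lemma kernel_L2: assumes t: "t > 0"
  shows "(\<integral>\<^sup>+x. ennreal ((cmod (biharm_kernel t (x::'a::euclidean_space)))\<^sup>2) \<partial>lborel) < \<infinity>"
proof -
  define c :: real where "c = 1 / (2 * pi) ^ DIM('a)"
  have "(\<integral>\<^sup>+x. ennreal ((cmod (biharm_kernel t (x::'a)))\<^sup>2) \<partial>lborel)
     = (\<integral>\<^sup>+x. ennreal (c\<^sup>2) * ennreal ((cmod (FF t (x::'a)))\<^sup>2) \<partial>lborel)"
    unfolding kernel_eq c_def[symmetric]
    by (intro nn_integral_cong) (simp only: norm_mult norm_of_real power_mult_distrib power2_abs ennreal_mult[OF zero_le_power2 zero_le_power2])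
  also have "\<dots> = ennreal (c\<^sup>2) * (\<integral>\<^sup>+x. ennreal ((cmod (FF t (x::'a)))\<^sup>2) \<partial>lborel)"
    by (rule nn_integral_cmult) measurable
  also have "\<dots> < \<infinity>" using FF_L2[OF t, where 'a='a] by (simp add: ennreal_mult_less_top)
  finally show ?thesis .
qed

lemma expL2_L2:
  assumes "u0 \<in> expL2"
  shows "u0 \<in> borel_measurable lebesgue" "(\<integral>\<^sup>+y. ennreal ((u0 y)\<^sup>2) \<partial>lebesgue) < \<infinity>"
proof -
  from assms show u0m[measurable]: "u0 \<in> borel_measurable lebesgue" by (simp add: expL2_def loc_integrable_def)
  from assms obtain \<alpha> where a: "\<alpha> > 0" and fin: "(\<integral>\<^sup>+x. ennreal (exp ((u0 x)\<^sup>2 / \<alpha>\<^sup>2) - 1) \<partial>lebesgue) < \<infinity>"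
    by (auto simp: expL2_def)
  have "(\<integral>\<^sup>+y. ennreal ((u0 y)\<^sup>2) \<partial>lebesgue) \<le> (\<integral>\<^sup>+y. ennreal (\<alpha>\<^sup>2) * ennreal (exp ((u0 y)\<^sup>2 / \<alpha>\<^sup>2) - 1) \<partial>lebesgue)"
  proof (intro nn_integral_mono)
    fix y
    have "(u0 y)\<^sup>2 / \<alpha>\<^sup>2 \<le> exp ((u0 y)\<^sup>2 / \<alpha>\<^sup>2) - 1"
      using exp_ge_add_one_self[of "(u0 y)\<^sup>2 / \<alpha>\<^sup>2"] by linarith
    then have "\<alpha>\<^sup>2 * ((u0 y)\<^sup>2 / \<alpha>\<^sup>2) \<le> \<alpha>\<^sup>2 * (exp ((u0 y)\<^sup>2 / \<alpha>\<^sup>2) - 1)"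
      by (intro mult_left_mono) auto
    then have "(u0 y)\<^sup>2 \<le> \<alpha>\<^sup>2 * (exp ((u0 y)\<^sup>2 / \<alpha>\<^sup>2) - 1)" using a by simp
    then have "ennreal ((u0 y)\<^sup>2) \<le> ennreal (\<alpha>\<^sup>2 * (exp ((u0 y)\<^sup>2 / \<alpha>\<^sup>2) - 1))"
      by (rule ennreal_leI)
    also have "\<dots> = ennreal (\<alpha>\<^sup>2) * ennreal (exp ((u0 y)\<^sup>2 / \<alpha>\<^sup>2) - 1)"
      by (rule ennreal_mult) auto
    finally show "ennreal ((u0 y)\<^sup>2) \<le> ennreal (\<alpha>\<^sup>2) * ennreal (exp ((u0 y)\<^sup>2 / \<alpha>\<^sup>2) - 1)" .
  qed
  also have "\<dots> = ennreal (\<alpha>\<^sup>2) * (\<integral>\<^sup>+y. ennreal (exp ((u0 y)\<^sup>2 / \<alpha>\<^sup>2) - 1) \<partial>lebesgue)"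
    by (intro nn_integral_cmult) measurable
  also have "\<dots> < \<infinity>" using fin by (simp add: ennreal_mult_less_top)
  finally show "(\<integral>\<^sup>+y. ennreal ((u0 y)\<^sup>2) \<partial>lebesgue) < \<infinity>" .
qed

lemma heat_bound:
  fixes u0 :: "'a::euclidean_space \<Rightarrow> real"
  assumes t: "t > 0" and u0: "u0 \<in> expL2"
  shows "\<exists>M. \<forall>x. cmod (biharm_heat t u0 x) \<le> M"
proof -
  define E where "E = (biharm_kernel t :: 'a \<Rightarrow> complex)"
  have Em[measurable]: "E \<in> borel_measurable borel" unfolding E_def by measurable
  define A where "A = (\<integral>\<^sup>+x. ennreal ((cmod (E x))\<^sup>2) \<partial>lborel)"
  define B where "B = (\<integral>\<^sup>+y. ennreal ((u0 y)\<^sup>2) \<partial>lebesgue)"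
  have u0m[measurable]: "u0 \<in> borel_measurable lebesgue" using expL2_L2[OF u0] by simp
  have AB: "A + B < \<infinity>" unfolding A_def B_def E_def using kernel_L2[OF t, where 'a='a] expL2_L2[OF u0] by simp
  have "cmod (biharm_heat t u0 x) \<le> enn2real (A + B)" for x
  proof (cases "integrable lebesgue (\<lambda>y. E (x - y) * complex_of_real (u0 y))")
    case True
    have "ennreal (cmod (biharm_heat t u0 x)) \<le> (\<integral>\<^sup>+y. ennreal (cmod (E (x - y) * complex_of_real (u0 y))) \<partial>lebesgue)"
      unfolding biharm_heat_def E_def[symmetric] using True by (rule integral_norm_bound_ennreal)
    also have "\<dots> \<le> (\<integral>\<^sup>+y. ennreal ((cmod (E (x - y)))\<^sup>2) + ennreal ((u0 y)\<^sup>2) \<partial>lebesgue)"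
    proof (intro nn_integral_mono)
      fix y
      define p where "p = cmod (E (x - y))"
      define q where "q = \<bar>u0 y\<bar>"
      have "p \<ge> 0" "q \<ge> 0" unfolding p_def q_def by auto
      have "0 \<le> (p - q)\<^sup>2" by simp
      then have "2 * (p * q) \<le> p\<^sup>2 + q\<^sup>2" by (simp add: power2_diff)
      then have "p * q \<le> p\<^sup>2 + q\<^sup>2" using \<open>p \<ge> 0\<close> \<open>q \<ge> 0\<close> mult_nonneg_nonneg[of p q] by linarith
      then have "cmod (E (x - y) * complex_of_real (u0 y)) \<le> (cmod (E (x - y)))\<^sup>2 + (u0 y)\<^sup>2"
        unfolding p_def q_def by (simp add: norm_mult)
      then show "ennreal (cmod (E (x - y) * complex_of_real (u0 y))) \<le> ennreal ((cmod (E (x - y)))\<^sup>2) + ennreal ((u0 y)\<^sup>2)"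
        by (simp add: ennreal_plus[symmetric] del: ennreal_plus)
    qed
    also have "\<dots> = (\<integral>\<^sup>+y. ennreal ((cmod (E (x - y)))\<^sup>2) \<partial>lebesgue) + B"
      unfolding B_def by (rule nn_integral_add) (measurable, auto intro: measurable_completion)
    also have "(\<integral>\<^sup>+y. ennreal ((cmod (E (x - y)))\<^sup>2) \<partial>lebesgue) = A"
      unfolding A_def nn_integral_completion by (rule nn_integral_reflect[where f="\<lambda>z. ennreal ((cmod (E z))\<^sup>2)"]) measurable
    finally have le: "ennreal (cmod (biharm_heat t u0 x)) \<le> A + B" .
    have "cmod (biharm_heat t u0 x) = enn2real (ennreal (cmod (biharm_heat t u0 x)))" by simp
    also have "\<dots> \<le> enn2real (A + B)" using enn2real_mono[OF le] AB by auto
    finally show ?thesis .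
  next
    case False
    then have "biharm_heat t u0 x = 0"
      unfolding biharm_heat_def E_def[symmetric] by (rule not_integrable_integral_eq)
    then show ?thesis by simp
  qed
  then show ?thesis by blast
qed

theorem proposition3p10:
  fixes u0 :: "'a::euclidean_space \<Rightarrow> real" and t :: real
  assumes "t > 0" and "u0 \<in> expL2"
  shows "Linfty_pos (rearr2 (biharm_heat t u0))"
proof -
  from heat_bound[OF assms] obtain M where "\<And>x. cmod (biharm_heat t u0 x) \<le> M" by blast
  then show ?thesis by (rule Linfty_bounded)
qed

end
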